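(* Let $j_1,j_2$ be real numbers and $p\in\{0,1\}$. Let $\Psi_1$ be the generating highest-weight vector, of parity $p$, of a chiral $\mathfrak{sl}(2|1)$-module $[j_1,\mp j_1]$ and $\Psi_2$ the generating vector of the chiral module $[j_2,\pm j_2]$ of opposite chirality (upper signs: $\Psi_1$ left-chiral, $\Psi_2$ right-chiral; lower signs: the reverse). Let $\mathbf U_+=\mathbf V_++\mathbf W_+$. Then for every $n\ge0$, $$n!\sum_{k_1+k_2=2n}\frac{(-1)^{\lfloor (k_1+1-p)/2\rfloor}}{\Gamma\!\left(1+\lfloor\frac{k_1}{2}\rfloor\right)\Gamma\!\left(1+\lfloor\frac{k_2}{2}\rfloor\right)\Gamma\!\left(2j_1+\lfloor\frac{k_1+1}{2}\rfloor\right)\Gamma\!\left(2j_2+\lfloor\frac{k_2+1}{2}\rfloor\right)}\ \mathbf U_+^{k_1}\Psi_1\otimes\mathbf U_+^{k_2}\Psi_2$$ equals $$\sum_{n_1+n_2=n}\binom{n}{n_1}\frac{(-1)^{n_1}}{\Gamma(2j_1+n_1)\Gamma(2j_2+n_2)}\mathbf L_+^{n_1}\Psi_1\otimes\mathbf L_+^{n_2}\Psi_2-(-1)^p\,n\sum_{m_1+m_2=n-1}\binom{n-1}{m_1}\frac{(-1)^{m_1}}{\Gamma(2j_1+1+m_1)\Gamma(2j_2+1+m_2)}\mathbf L_+^{m_1}\mathbf X\Psi_1\otimes\mathbf L_+^{m_2}\mathbf Y\Psi_2,$$ where $(\mathbf X,\mathbf Y)=(\mathbf V_+,\mathbf W_+)$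 for the upper signs and $(\mathbf X,\mathbf Y)=(\mathbf W_+,\mathbf V_+)$ for the lower signs, and the second sum is empty for $n=0$. This vector is a highest-weight vector of $[j_1,\mp j_1]\otimes[j_2,\pm j_2]$ with $\mathbf L$-eigenvalue $j_1+j_2+n$ and $\mathbf B$-eigenvalue $\mp(j_1-j_2)$.
   Context: $\mathfrak{sl}(2|1)$ denotes the complex Lie superalgebra with even basis $\mathbf L_+,\mathbf L_-,\mathbf L,\mathbf B$ and odd basis $\mathbf V_+,\mathbf V_-,\mathbf W_+,\mathbf W_-$, with relations: $[\mathbf L_+,\mathbf L_-]=2\mathbf L$, $[\mathbf L,\mathbf L_\pm]=\pm\mathbf L_\pm$, $\mathbf B$ commutes with $\mathbf L_\pm,\mathbf L$; for $\mathbf X\in\{\mathbf V,\mathbf W\}$: $[\mathbf L,\mathbf X_\pm]=\pm\tfrac12\mathbf X_\pm$, $[\mathbf L_+,\mathbf X_-]=\mathbf X_+$, $[\mathbf L_-,\mathbf X_+]=\mathbf X_-$, $[\mathbf L_+,\mathbf X_+]=[\mathbf L_-,\mathbf X_-]=0$; $[\mathbf B,\mathbf V_\pm]=\tfrac12\mathbf V_\pm$, $[\mathbf B,\mathbf W_\pm]=-\tfrac12\mathbf W_\pm$; $\{\mathbf V_a,\mathbf V_b\}=\{\mathbf W_a,\mathbf W_b\}=0$, $\{\mathbf V_+,\mathbf W_+\}=\mathbf L_+$, $\{\mathbf V_+,\mathbf W_-\}=-\mathbf L+\mathbf B$, $\{\mathbf V_-,\mathbf W_+\}=-\mathbf L-\mathbf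 B$, $\{\mathbf V_-,\mathbf W_-\}=-\mathbf L_-$. The left-chiral module $[J,-J]$ is the $\mathbb Z_2$-graded module generated by a homogeneous vector $\Omega$ with $\mathbf L_-\Omega=\mathbf V_-\Omega=\mathbf W_-\Omega=\mathbf W_+\Omega=0$, $\mathbf L\Omega=J\Omega$, $\mathbf B\Omega=-J\Omega$ (basis $\mathbf L_+^n\Omega,\mathbf L_+^n\mathbf V_+\Omega$); the right-chiral module $[J,J]$ is generated by $\Omega$ with $\mathbf L_-\Omega=\mathbf V_-\Omega=\mathbf W_-\Omega=\mathbf V_+\Omega=0$, $\mathbf L\Omega=J\Omega$, $\mathbf B\Omega=J\Omega$ (basis $\mathbf L_+^n\Omega,\mathbf L_+^n\mathbf W_+\Omega$). A highest-weight vector is one annihilated by $\mathbf L_-,\mathbf V_-,\mathbf W_-$. Tensor products carry the action $G(x\otimes y)=Gx\otimes y+(-1)^{|G||x|}x\otimes Gy$ for homogeneous $G,x$. Here $1/\Gamma$ is understood as the (entire) reciprocal Gamma function, and $\lfloor\cdot\rfloor$ is the floor function. *)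

theory Defs
  imports "HOL-Analysis.Analysis"
begin

text \<open>Generators of sl(2|1): L_+, L_-, L, B (even) and V_+, V_-, W_+, W_- (odd).\<close>
datatype gen = Lp | Lm | Lz | Bz | Vp | Vm | Wp | Wm

fun gen_odd :: "gen \<Rightarrow> bool" where
  "gen_odd Vp = True" | "gen_odd Vm = True" | "gen_odd Wp = True" | "gen_odd Wm = True"
| "gen_odd Lp = False" | "gen_odd Lm = False" | "gen_odd Lz = False" | "gen_odd Bz = False"

text \<open>Basis of a chiral module: index (n, False) is L_+^n Omega, and index (n, True) is
  L_+^n V_+ Omega (left-chiral [J,-J]) resp. L_+^n W_+ Omega (right-chiral [J,J]).\<close>
type_synonym idx = "nat \<times> bool"

definition bvec :: "'i \<Rightarrow> 'i \<Rightarrow> complex" where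
  "bvec b = (\<lambda>t. if t = b then 1 else 0)"

definition svec :: "real \<Rightarrow> 'i \<Rightarrow> 'i \<Rightarrow> complex" where
  "svec c b = (\<lambda>t. complex_of_real c * bvec b t)"

text \<open>Action of a generator on a basis vector of the chiral module; chi = True means
  left-chiral [J,-J], chi = False means right-chiral [J,J]. These are the formulas forced
  by the defining relations.\<close>
fun chiral_act :: "bool \<Rightarrow> real \<Rightarrow> gen \<Rightarrow> idx \<Rightarrow> idx \<Rightarrow> complex" where
  "chiral_act chi J Lp (n, b) = bvec (n + 1, b)"
| "chiral_act chi J Lm (n, b) =
     svec (- (real n * (2 * J + real n - (if b then 0 else 1)))) (n - 1, b)"
| "chiral_act chi J Lz (n, b) = svec (J + real n + (if b then 1/2 else 0)) (n, b)"
| "chiral_act chi J Bz (n, b) =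
     svec ((if chi then - J else J) + (if b then (if chi then 1/2 else - 1/2) else 0)) (n, b)"
| "chiral_act chi J Vp (n, b) =
     (if chi then (if b then (\<lambda>_. 0) else bvec (n, True))
      else (if b then bvec (n + 1, False) else (\<lambda>_. 0)))"
| "chiral_act chi J Wp (n, b) =
     (if chi then (if b then bvec (n + 1, False) else (\<lambda>_. 0))
      else (if b then (\<lambda>_. 0) else bvec (n, True)))"
| "chiral_act chi J Vm (n, b) =
     (if chi then (if b then (\<lambda>_. 0) else svec (- real n) (n - 1, True))
      else (if b then svec (- (2 * J + real n)) (n, False) else (\<lambda>_. 0)))"
| "chiral_act chi J Wm (n, b) =
     (if chi then (if b then svec (- (2 * J + real n)) (n, False) else (\<lambda>_. 0))
      else (if b then (\<lambda>_. 0) else svec (- real n) (n - 1, True)))"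

definition lin_ext :: "('i \<Rightarrow> 'j \<Rightarrow> complex) \<Rightarrow> ('i \<Rightarrow> complex) \<Rightarrow> 'j \<Rightarrow> complex" where
  "lin_ext f v = (\<lambda>t. \<Sum>b\<in>{b. v b \<noteq> 0}. v b * f b t)"

definition chiral_op :: "bool \<Rightarrow> real \<Rightarrow> gen \<Rightarrow> (idx \<Rightarrow> complex) \<Rightarrow> idx \<Rightarrow> complex" where
  "chiral_op chi J G = lin_ext (chiral_act chi J G)"

definition idx_parity :: "nat \<Rightarrow> idx \<Rightarrow> nat" where
  "idx_parity p b = (p + (if snd b then 1 else 0)) mod 2"

definition tens :: "('i \<Rightarrow> complex) \<Rightarrow> ('j \<Rightarrow> complex) \<Rightarrow> 'i \<times> 'j \<Rightarrow> complex" where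
  "tens x y = (\<lambda>(i, j). x i * y j)"

definition tensor_act :: "bool \<Rightarrow> real \<Rightarrow> nat \<Rightarrow> bool \<Rightarrow> real \<Rightarrow> nat \<Rightarrow> gen
    \<Rightarrow> idx \<times> idx \<Rightarrow> idx \<times> idx \<Rightarrow> complex" where
  "tensor_act chi1 J1 p1 chi2 J2 p2 G bb =
     (case bb of (b1, b2) \<Rightarrow>
       (\<lambda>t. tens (chiral_act chi1 J1 G b1) (bvec b2) t
          + (if gen_odd G \<and> idx_parity p1 b1 = 1 then -1 else 1)
            * tens (bvec b1) (chiral_act chi2 J2 G b2) t))"

definition tensor_op :: "bool \<Rightarrow> real \<Rightarrow> nat \<Rightarrow> bool \<Rightarrow> real \<Rightarrow> nat \<Rightarrow> gen
    \<Rightarrow> (idx \<times> idx \<Rightarrow> complex) \<Rightarrow> idx \<times> idx \<Rightarrow> complex" where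
  "tensor_op chi1 J1 p1 chi2 J2 p2 G = lin_ext (tensor_act chi1 J1 p1 chi2 J2 p2 G)"

definition U_op :: "bool \<Rightarrow> real \<Rightarrow> (idx \<Rightarrow> complex) \<Rightarrow> idx \<Rightarrow> complex" where
  "U_op chi J v = (\<lambda>t. chiral_op chi J Vp v t + chiral_op chi J Wp v t)"

end

theory Submission
  imports Defs
begin


lemma lin_ext_superset:
  assumes "finite S" "{b. v b \<noteq> 0} \<subseteq> S"
  shows "lin_ext f v t = (\<Sum>b\<in>S. v b * f b t)"
  unfolding lin_ext_def by (rule sum.mono_neutral_left) (use assms in auto)

lemma lin_ext_bvec: "lin_ext f (bvec b) = f b"
proof
  fix t show "lin_ext f (bvec b) t = f b t"
    by (subst lin_ext_superset[where S="{b}"]) (auto simp: bvec_def)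
qed

lemma lin_ext_delta:
  assumes "finite {b. v b \<noteq> 0}" "\<And>b. f b t = (if b = b0 then k else 0)"
  shows "lin_ext f v t = v b0 * k"
proof -
  have "lin_ext f v t = (\<Sum>b\<in>insert b0 {b. v b \<noteq> 0}. v b * f b t)"
    by (rule lin_ext_superset) (use assms in auto)
  also have "\<dots> = (\<Sum>b\<in>insert b0 {b. v b \<noteq> 0}. (if b = b0 then v b0 * k else 0))"
    by (rule sum.cong) (auto simp: assms)
  also have "\<dots> = v b0 * k" using assms(1) by simp
  finally show ?thesis .
qed

lemma tensor_op_split:
  assumes fin: "finite {b. w b \<noteq> 0}"
  shows "tensor_op c1 J1 p1 c2 J2 p2 G w (t1,t2) = chiral_op c1 J1 G (\<lambda>b. w (b,t2)) t1
     + (if gen_odd G \<and> idx_parity p1 t1 = 1 then -1 else 1) * chiral_op c2 J2 G (\<lambda>b. w (t1,b)) t2"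
proof -
  define S where "S = {b. w b \<noteq> 0}"
  define A where "A = fst ` S"
  define B where "B = snd ` S"
  have fA: "finite A" and fB: "finite B" using fin by (auto simp: A_def B_def S_def)
  have sub: "S \<subseteq> A \<times> B" by (force simp: A_def B_def)
  let ?a1 = "chiral_act c1 J1 G" and ?a2 = "chiral_act c2 J2 G"
  let ?sg = "\<lambda>b1. (if gen_odd G \<and> idx_parity p1 b1 = 1 then -1 else 1) :: complex"
  have "tensor_op c1 J1 p1 c2 J2 p2 G w (t1,t2) = (\<Sum>b\<in>A \<times> B. w b * tensor_act c1 J1 p1 c2 J2 p2 G b (t1,t2))"
    unfolding tensor_op_def by (rule lin_ext_superset) (use fA fB sub in \<open>auto simp: S_def\<close>)
  also have "\<dots> = (\<Sum>b1\<in>A. \<Sum>b2\<in>B. w (b1,b2) * ?a1 b1 t1 * bvec b2 t2)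
      + (\<Sum>b1\<in>A. \<Sum>b2\<in>B. ?sg t1 * (w (b1,b2) * bvec b1 t1 * ?a2 b2 t2))"
  proof -
    have "(\<Sum>b\<in>A \<times> B. w b * tensor_act c1 J1 p1 c2 J2 p2 G b (t1,t2))
       = (\<Sum>b\<in>A \<times> B. w (fst b, snd b) * ?a1 (fst b) t1 * bvec (snd b) t2 + ?sg t1 * (w (fst b, snd b) * bvec (fst b) t1 * ?a2 (snd b) t2))"
      by (rule sum.cong[OF refl]) (auto simp: tensor_act_def tens_def bvec_def algebra_simps)
    also have "\<dots> = (\<Sum>b\<in>A \<times> B. w (fst b, snd b) * ?a1 (fst b) t1 * bvec (snd b) t2) + (\<Sum>b\<in>A \<times> B. ?sg t1 * (w (fst b, snd b) * bvec (fst b) t1 * ?a2 (snd b) t2))"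
      by (rule sum.distrib)
    finally show ?thesis by (simp add: sum.cartesian_product split_def)
  qed
  also have "(\<Sum>b1\<in>A. \<Sum>b2\<in>B. w (b1,b2) * ?a1 b1 t1 * bvec b2 t2) = (\<Sum>b1\<in>A. w (b1,t2) * ?a1 b1 t1)"
  proof (rule sum.cong[OF refl])
    fix b1 show "(\<Sum>b2\<in>B. w (b1,b2) * ?a1 b1 t1 * bvec b2 t2) = w (b1,t2) * ?a1 b1 t1"
    proof (cases "t2 \<in> B")
      case True then show ?thesis using fB by (simp add: bvec_def if_distrib cong: if_cong)
    next
      case False
      then have "w (b1,t2) = 0" by (force simp: B_def S_def)
      then show ?thesis using False by (auto simp: bvec_def intro!: sum.neutral)
    qed
  qed
  also have "\<dots> = chiral_op c1 J1 G (\<lambda>b. w (b,t2)) t1"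
    unfolding chiral_op_def by (rule lin_ext_superset[symmetric]) (use fA in \<open>force simp: A_def S_def\<close>)+
  also have "(\<Sum>b1\<in>A. \<Sum>b2\<in>B. ?sg t1 * (w (b1,b2) * bvec b1 t1 * ?a2 b2 t2)) = ?sg t1 * (\<Sum>b2\<in>B. w (t1,b2) * ?a2 b2 t2)"
  proof (cases "t1 \<in> A")
    case True
    have "(\<Sum>b1\<in>A. \<Sum>b2\<in>B. ?sg t1 * (w (b1,b2) * bvec b1 t1 * ?a2 b2 t2))
        = (\<Sum>b2\<in>B. \<Sum>b1\<in>A. ?sg t1 * (w (b1,b2) * bvec b1 t1 * ?a2 b2 t2))" by (rule sum.swap)
    also have "\<dots> = (\<Sum>b2\<in>B. ?sg t1 * (w (t1,b2) * ?a2 b2 t2))"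
    proof (rule sum.cong[OF refl])
      fix b2
      have "(\<Sum>b1\<in>A. ?sg t1 * (w (b1,b2) * bvec b1 t1 * ?a2 b2 t2))
          = (\<Sum>b1\<in>A. (if b1 = t1 then ?sg t1 * (w (t1,b2) * ?a2 b2 t2) else 0))"
        by (rule sum.cong[OF refl]) (auto simp: bvec_def)
      also have "\<dots> = ?sg t1 * (w (t1,b2) * ?a2 b2 t2)" using True fA by simp
      finally show "(\<Sum>b1\<in>A. ?sg t1 * (w (b1,b2) * bvec b1 t1 * ?a2 b2 t2)) = ?sg t1 * (w (t1,b2) * ?a2 b2 t2)" .
    qed
    finally show ?thesis by (simp add: sum_distrib_left)
  next
    case False
    then have "\<And>b2. w (t1,b2) = 0" by (force simp: A_def S_def)
    then show ?thesis using False by (auto simp: bvec_def intro!: sum.neutral)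
  qed
  also have "(\<Sum>b2\<in>B. w (t1,b2) * ?a2 b2 t2) = chiral_op c2 J2 G (\<lambda>b. w (t1,b)) t2"
    unfolding chiral_op_def by (rule lin_ext_superset[symmetric]) (use fB in \<open>force simp: B_def S_def\<close>)+
  finally show ?thesis .
qed


lemma fin_delta_op:
  assumes "finite {b. v b \<noteq> 0}" "\<And>n bb. chiral_act c J G (n,bb) t = (if (n,bb) = b0 then k else 0)"
  shows "chiral_op c J G v t = v b0 * k"
  unfolding chiral_op_def by (rule lin_ext_delta) (use assms in auto)

lemma op_Lm: "finite {b. v b \<noteq> 0} \<Longrightarrow> chiral_op c J Lm v (m,\<beta>)
   = v (Suc m,\<beta>) * complex_of_real (- (real (Suc m) * (2*J + real (Suc m) - (if \<beta> then 0 else 1))))"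
  by (rule fin_delta_op) (auto simp: svec_def bvec_def split: nat.splits)

lemma op_Lz: "finite {b. v b \<noteq> 0} \<Longrightarrow> chiral_op c J Lz v (m,\<beta>)
   = v (m,\<beta>) * complex_of_real (J + real m + (if \<beta> then 1/2 else 0))"
  by (rule fin_delta_op) (auto simp: svec_def bvec_def)

lemma op_Bz: "finite {b. v b \<noteq> 0} \<Longrightarrow> chiral_op c J Bz v (m,\<beta>)
   = v (m,\<beta>) * complex_of_real ((if c then - J else J) + (if \<beta> then (if c then 1/2 else - 1/2) else 0))"
  by (rule fin_delta_op) (auto simp: svec_def bvec_def)

lemma op_Vm_T: "finite {b. v b \<noteq> 0} \<Longrightarrow> chiral_op True J Vm v (m,\<beta>)
   = (if \<beta> then v (Suc m,False) * complex_of_real (- real (Suc m)) else 0)"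
proof (cases \<beta>)
  case True
  assume f: "finite {b. v b \<noteq> 0}"
  show ?thesis using True by simp (rule fin_delta_op[OF f], auto simp: svec_def bvec_def split: nat.splits)
next
  case False
  assume f: "finite {b. v b \<noteq> 0}"
  have "chiral_op True J Vm v (m,\<beta>) = v (0,False) * 0"
    by (rule fin_delta_op[OF f]) (use False in \<open>auto simp: svec_def bvec_def\<close>)
  then show ?thesis using False by simp
qed

lemma op_Vm_F: "finite {b. v b \<noteq> 0} \<Longrightarrow> chiral_op False J Vm v (m,\<beta>)
   = (if \<beta> then 0 else v (m,True) * complex_of_real (- (2*J + real m)))"
proof (cases \<beta>)
  case False
  assume f: "finite {b. v b \<noteq> 0}"
  show ?thesis using False by simp (rule fin_delta_op[OF f], auto simp: svec_def bvec_def split: nat.splits)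
next
  case True
  assume f: "finite {b. v b \<noteq> 0}"
  have "chiral_op False J Vm v (m,\<beta>) = v (0,False) * 0"
    by (rule fin_delta_op[OF f]) (use True in \<open>auto simp: svec_def bvec_def\<close>)
  then show ?thesis using True by simp
qed

lemma op_Wm_F: "finite {b. v b \<noteq> 0} \<Longrightarrow> chiral_op False J Wm v (m,\<beta>)
   = (if \<beta> then v (Suc m,False) * complex_of_real (- real (Suc m)) else 0)"
proof (cases \<beta>)
  case True
  assume f: "finite {b. v b \<noteq> 0}"
  show ?thesis using True by simp (rule fin_delta_op[OF f], auto simp: svec_def bvec_def split: nat.splits)
next
  case False
  assume f: "finite {b. v b \<noteq> 0}"
  have "chiral_op False J Wm v (m,\<beta>) = v (0,False) * 0"
    by (rule fin_delta_op[OF f]) (use False in \<open>auto simp: svec_def bvec_def\<close>)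
  then show ?thesis using False by simp
qed

lemma op_Wm_T: "finite {b. v b \<noteq> 0} \<Longrightarrow> chiral_op True J Wm v (m,\<beta>)
   = (if \<beta> then 0 else v (m,True) * complex_of_real (- (2*J + real m)))"
proof (cases \<beta>)
  case False
  assume f: "finite {b. v b \<noteq> 0}"
  show ?thesis using False by simp (rule fin_delta_op[OF f], auto simp: svec_def bvec_def split: nat.splits)
next
  case True
  assume f: "finite {b. v b \<noteq> 0}"
  have "chiral_op True J Wm v (m,\<beta>) = v (0,False) * 0"
    by (rule fin_delta_op[OF f]) (use True in \<open>auto simp: svec_def bvec_def\<close>)
  then show ?thesis using True by simp
qed

lemma tens_bvec: "tens (bvec a) (bvec b) = bvec (a,b)"
  by (auto simp: tens_def bvec_def)

lemma chiral_op_bvec: "chiral_op c J G (bvec b) = chiral_act c J G b"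
  unfolding chiral_op_def by (rule lin_ext_bvec)

lemma U_bvec: "U_op c J (bvec (m,bb)) = (if bb then bvec (Suc m, False) else bvec (m, True))"
  unfolding U_op_def chiral_op_bvec by (cases c; cases bb) (auto simp: bvec_def)

lemma U_pow: "(U_op c J ^^ k) (bvec (0,False)) = bvec (k div 2, odd k)"
  by (induction k) (auto simp: U_bvec)

lemma Lp_pow: "(chiral_op c J Lp ^^ k) (bvec (0,b)) = bvec (k,b)"
  by (induction k) (auto simp: chiral_op_bvec)


lemma sum_bvec_collapse:
  assumes "finite A" "\<And>k. k \<in> A \<Longrightarrow> g k = t \<Longrightarrow> k = K"
  shows "(\<Sum>k\<in>A. f k * bvec (g k) t) = (if K \<in> A \<and> g K = t then f K else 0)"
proof (cases "K \<in> A \<and> g K = t")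
  case True
  have "(\<Sum>k\<in>A. f k * bvec (g k) t) = (\<Sum>k\<in>A. if k = K then f K else 0)"
  proof (rule sum.cong[OF refl])
    fix k assume k: "k \<in> A"
    show "f k * bvec (g k) t = (if k = K then f K else 0)"
    proof (cases "k = K")
      case True then show ?thesis using \<open>K \<in> A \<and> g K = t\<close> by (simp add: bvec_def)
    next
      case False then have "g k \<noteq> t" using assms(2) k by blast
      then show ?thesis using False by (simp add: bvec_def)
    qed
  qed
  then show ?thesis using True assms(1) by simp
next
  case False
  have "(\<Sum>k\<in>A. f k * bvec (g k) t) = (\<Sum>k\<in>A. 0)"
  proof (rule sum.cong[OF refl])
    fix k assume k: "k \<in> A"
    have "g k \<noteq> t"
    proof
      assume "g k = t" then have "k = K" using assms(2) k by blast
      then show False using False k \<open>g k = t\<close> by blast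
    qed
    then show "f k * bvec (g k) t = 0" by (simp add: bvec_def)
  qed
  then show ?thesis using False by auto
qed

definition cR :: "real \<Rightarrow> real \<Rightarrow> nat \<Rightarrow> nat \<Rightarrow> real" where
 "cR j1 j2 n a = real (n choose a) * (-1)^a * rGamma (2*j1 + real a) * rGamma (2*j2 + real (n-a))"
definition dR :: "real \<Rightarrow> real \<Rightarrow> nat \<Rightarrow> nat \<Rightarrow> nat \<Rightarrow> real" where
 "dR j1 j2 p n a = - ((-1)^p) * real n * (real ((n-1) choose a) * (-1)^a
     * rGamma (2*j1 + 1 + real a) * rGamma (2*j2 + 1 + real (n-1-a)))"
definition WR :: "real \<Rightarrow> real \<Rightarrow> nat \<Rightarrow> nat \<Rightarrow> idx \<times> idx \<Rightarrow> real" where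
 "WR j1 j2 p n t = (case t of ((x1,b1),(x2,b2)) \<Rightarrow>
     (if \<not> b1 \<and> \<not> b2 \<and> x1 + x2 = n then cR j1 j2 n x1 else 0)
   + (if b1 \<and> b2 \<and> x1 + x2 + 1 = n then dR j1 j2 p n x1 else 0))"

lemma WR_fin1: "finite {b. complex_of_real (WR j1 j2 p n (b,t2)) \<noteq> 0}"
proof -
  have "{b. complex_of_real (WR j1 j2 p n (b,t2)) \<noteq> 0} \<subseteq> {..n} \<times> UNIV"
  proof clarsimp
    fix a bb assume "WR j1 j2 p n ((a,bb),t2) \<noteq> 0"
    then show "a \<le> n" by (cases t2) (auto simp: WR_def split: if_splits)
  qed
  then show ?thesis by (rule finite_subset) auto
qed

lemma WR_fin2: "finite {b. complex_of_real (WR j1 j2 p n (t1,b)) \<noteq> 0}"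
proof -
  have "{b. complex_of_real (WR j1 j2 p n (t1,b)) \<noteq> 0} \<subseteq> {..n} \<times> UNIV"
  proof clarsimp
    fix a bb assume "WR j1 j2 p n (t1,(a,bb)) \<noteq> 0"
    then show "a \<le> n" by (cases t1) (auto simp: WR_def split: if_splits)
  qed
  then show ?thesis by (rule finite_subset) auto
qed

lemma WR_fin: "finite {b. complex_of_real (WR j1 j2 p n b) \<noteq> 0}"
proof -
  have "{b. complex_of_real (WR j1 j2 p n b) \<noteq> 0} \<subseteq> ({..n} \<times> UNIV) \<times> ({..n} \<times> UNIV)"
  proof clarsimp
    fix a bb c cc assume "WR j1 j2 p n ((a,bb),(c,cc)) \<noteq> 0"
    then show "a \<le> n \<and> c \<le> n" by (auto simp: WR_def split: if_splits)
  qed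
  then show ?thesis by (rule finite_subset) auto
qed

lemma rGamma_fact1: "rGamma (1 + real m) = inverse (fact m)"
  using Gamma_fact[of m] by (simp add: rGamma_inverse_Gamma)

lemma coefF: "p \<le> 1 \<Longrightarrow> fact (x1+x2) * ((-1)^((2*x1+1-p) div 2) * rGamma(1+real x1) * rGamma(1+real x2)
   * rGamma(2*j1+real x1) * rGamma(2*j2+real x2)) = cR j1 j2 (x1+x2) x1"
proof -
  assume p: "p \<le> 1"
  have d: "(2*x1+1-p) div 2 = x1" using p by (cases p) auto
  have b: "real ((x1+x2) choose x1) = fact (x1+x2) / (fact x1 * fact x2)"
    by (subst binomial_fact) auto
  show ?thesis unfolding cR_def d rGamma_fact1 b by (simp add: field_simps)
qed

lemma coefT: "p \<le> 1 \<Longrightarrow> fact (x1+x2+1) * ((-1)^((2*x1+2-p) div 2) * rGamma(1+real x1) * rGamma(1+real x2)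
   * rGamma(2*j1+real (Suc x1)) * rGamma(2*j2+real (Suc x2))) = dR j1 j2 p (x1+x2+1) x1"
proof -
  assume p: "p \<le> 1"
  have d: "((-1::real)^((2*x1+2-p) div 2)) = - ((-1)^p) * (-1)^x1" using p by (cases p) auto
  have b: "real ((x1+x2) choose x1) = fact (x1+x2) / (fact x1 * fact x2)"
    by (subst binomial_fact) auto
  have f: "(fact (x1+x2+1) :: real) = real (x1+x2+1) * fact (x1+x2)"
    by (simp add: fact_Suc)
  show ?thesis unfolding dR_def d rGamma_fact1 f by (simp add: b field_simps)
qed



lemma rG_step: "rGamma (x::real) = x * rGamma (x + 1)"
  using rGamma_plus1[of x] by simp

lemma bin_rel: "real (Suc x1) * real (Suc (x1+x2) choose Suc x1) = real (Suc x2) * real (Suc (x1+x2) choose x1)"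
proof -
  have "Suc x1 * (Suc (x1+x2) choose Suc x1) = Suc (x1+x2) * ((x1+x2) choose x1)"
    by (rule Suc_times_binomial)
  moreover have "Suc x2 * (Suc (x1+x2) choose x1) = Suc (x1+x2) * ((x1+x2) choose x1)"
  proof -
    have "(Suc (x1+x2) choose x1) = (Suc (x1+x2) choose Suc x2)"
      by (subst binomial_symmetric) auto
    moreover have "((x1+x2) choose x1) = ((x1+x2) choose x2)"
      by (subst binomial_symmetric) auto
    moreover have "Suc x2 * (Suc (x2+x1) choose Suc x2) = Suc (x2+x1) * ((x2+x1) choose x2)"
      by (rule Suc_times_binomial)
    ultimately show ?thesis by (simp add: add.commute)
  qed
  ultimately show ?thesis by (metis of_nat_mult)
qed


lemma ringLmF:
  fixes RA0 RA1 RB0 RB1 C0 C1 m0 m1 s1 s2 a b x1 x2 j1 j2 :: real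
  assumes "RA0 = a * RA1" "RB0 = b * RB1" "s1 * C1 = s2 * C0" "m1 = - m0" "s1 = x1 + 1" "s2 = x2 + 1"
    "a = 2*j1 + x1" "b = 2*j2 + x2"
  shows "C1 * m1 * RA1 * RB0 * -(s1 * (2*j1 + s1 - 1)) + C0 * m0 * RA0 * RB1 * -(s2 * (2*j2 + s2 - 1)) = 0"
  using assms by algebra

lemma ringLmT:
  fixes RA0 RA1 RB0 RB1 C0 C1 m0 m1 s1 s2 a b x1 x2 j1 j2 q N :: real
  assumes "RA0 = a * RA1" "RB0 = b * RB1" "s1 * C1 = s2 * C0" "m1 = - m0" "s1 = x1 + 1" "s2 = x2 + 1"
    "a = 2*j1 + 1 + x1" "b = 2*j2 + 1 + x2"
  shows "-q * N * (C1 * m1 * RA1 * RB0) * -(s1 * (2*j1 + s1 - 0)) + -q * N * (C0 * m0 * RA0 * RB1) * -(s2 * (2*j2 + s2 - 0)) = 0"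
  using assms by algebra

lemma ringA:
  fixes RA RB0 RB1 C0 C1 m0 m1 s1 b q N S :: real
  assumes "RB0 = b * RB1" "s1 * C1 = N * C0" "S * - q = 1" "m1 = - m0"
  shows "C1 * m1 * RA * RB0 * - s1 + S * (-q * N * (C0 * m0 * RA * RB1) * -b) = 0"
  using assms by algebra

lemma ringB:
  fixes RA0 RA1 RB1 C C' m a q N s2 :: real
  assumes "RA0 = a * RA1" "s2 * C = N * C'"
  shows "-q * N * (C' * m * RA1 * RB1) * -a + q * (C * m * RA0 * RB1 * - s2) = 0"
  using assms by algebra

lemma m1Suc: "(-1::real)^Suc x = - ((-1)^x)" by simp
lemma rSuc: "real (Suc x) = real x + 1" by simp

lemma Lm_real:
  "WR j1 j2 p n ((Suc x1,b1),(x2,b2)) * (- (real (Suc x1) * (2*j1 + real (Suc x1) - (if b1 then 0 else 1))))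
 + WR j1 j2 p n ((x1,b1),(Suc x2,b2)) * (- (real (Suc x2) * (2*j2 + real (Suc x2) - (if b2 then 0 else 1)))) = 0"
proof (cases "(\<not> b1 \<and> \<not> b2 \<and> Suc (x1 + x2) = n) \<or> (b1 \<and> b2 \<and> Suc (Suc (x1 + x2)) = n)")
  case True
  then consider (FF) "b1 = False" "b2 = False" "Suc (x1 + x2) = n" | (TT) "b1 = True" "b2 = True" "Suc (Suc (x1 + x2)) = n"
    by blast
  then show ?thesis
  proof cases
    case FF
    note T = FF(3)
    have w1: "WR j1 j2 p n ((Suc x1,False),(x2,False)) = real (n choose Suc x1) * (-1)^(Suc x1)
        * rGamma (2*j1 + real (Suc x1)) * rGamma (2*j2 + real x2)"
      by (simp add: WR_def cR_def T[symmetric])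
    have w2: "WR j1 j2 p n ((x1,False),(Suc x2,False)) = real (n choose x1) * (-1)^x1
        * rGamma (2*j1 + real x1) * rGamma (2*j2 + real (Suc x2))"
      by (simp add: WR_def cR_def T[symmetric])
    have ga: "rGamma (2*j1 + real x1) = (2*j1 + real x1) * rGamma (2*j1 + real (Suc x1))"
      using rG_step[of "2*j1 + real x1"] by (simp add: ac_simps)
    have gb: "rGamma (2*j2 + real x2) = (2*j2 + real x2) * rGamma (2*j2 + real (Suc x2))"
      using rG_step[of "2*j2 + real x2"] by (simp add: ac_simps)
    have bin: "real (Suc x1) * real (n choose Suc x1) = real (Suc x2) * real (n choose x1)"
      using bin_rel[of x1 x2] unfolding T .
    show ?thesis unfolding FF(1,2) if_False w1 w2
      by (rule ringLmF[OF ga gb bin m1Suc rSuc rSuc]) simp_all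
  next
    case TT
    note T = TT(3)
    have w1: "WR j1 j2 p n ((Suc x1,True),(x2,True)) = -((-1)^p) * real n * (real ((n-1) choose Suc x1) * (-1)^(Suc x1)
        * rGamma (2*j1 + 1 + real (Suc x1)) * rGamma (2*j2 + 1 + real x2))"
      by (simp add: WR_def dR_def T[symmetric])
    have w2: "WR j1 j2 p n ((x1,True),(Suc x2,True)) = -((-1)^p) * real n * (real ((n-1) choose x1) * (-1)^x1
        * rGamma (2*j1 + 1 + real x1) * rGamma (2*j2 + 1 + real (Suc x2)))"
      by (simp add: WR_def dR_def T[symmetric])
    have ga: "rGamma (2*j1 + 1 + real x1) = (2*j1 + 1 + real x1) * rGamma (2*j1 + 1 + real (Suc x1))"
      using rG_step[of "2*j1 + 1 + real x1"] by (simp add: ac_simps)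
    have gb: "rGamma (2*j2 + 1 + real x2) = (2*j2 + 1 + real x2) * rGamma (2*j2 + 1 + real (Suc x2))"
      using rG_step[of "2*j2 + 1 + real x2"] by (simp add: ac_simps)
    have bin: "real (Suc x1) * real ((n-1) choose Suc x1) = real (Suc x2) * real ((n-1) choose x1)"
      using bin_rel[of x1 x2] T by auto
    show ?thesis unfolding TT(1,2) if_True w1 w2
      by (rule ringLmT[OF ga gb bin m1Suc rSuc rSuc]) simp_all
  qed
next
  case False
  then show ?thesis by (cases b1; cases b2) (auto simp: WR_def)
qed

lemma A_real: assumes "p \<le> 1" shows
  "(if b1 then WR j1 j2 p n ((Suc x1,False),(x2,b2)) * (- real (Suc x1)) else 0)
   + (if idx_parity p (x1,b1) = 1 then -1 else 1) * (if b2 then 0 else WR j1 j2 p n ((x1,b1),(x2,True)) * (-(2*j2+real x2))) = 0"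
proof (cases "b1 \<and> \<not> b2 \<and> Suc (x1 + x2) = n")
  case True
  then have b: "b1 = True" "b2 = False" and T: "Suc (x1+x2) = n" by auto
  have w1: "WR j1 j2 p n ((Suc x1,False),(x2,False)) = real (n choose Suc x1) * (-1)^(Suc x1)
        * rGamma (2*j1 + 1 + real x1) * rGamma (2*j2 + real x2)"
    by (simp add: WR_def cR_def T[symmetric] ac_simps)
  have w2: "WR j1 j2 p n ((x1,True),(x2,True)) = -((-1)^p) * real n * (real ((n-1) choose x1) * (-1)^x1
        * rGamma (2*j1 + 1 + real x1) * rGamma (2*j2 + 1 + real x2))"
    by (simp add: WR_def dR_def T[symmetric])
  have gb: "rGamma (2*j2 + real x2) = (2*j2 + real x2) * rGamma (2*j2 + 1 + real x2)"
    using rG_step[of "2*j2 + real x2"] by (simp add: ac_simps)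
  have bin: "real (Suc x1) * real (n choose Suc x1) = real n * real ((n-1) choose x1)"
    using binomial_absorption[of x1 n] by (metis of_nat_mult)
  have sg: "(if idx_parity p (x1,True) = 1 then -1 else 1) * (-((-1::real)^p)) = 1"
    using assms by (cases p) (auto simp: idx_parity_def)
  show ?thesis unfolding b if_True if_False w1 w2
    by (rule ringA[OF gb bin sg m1Suc])
next
  case False
  then show ?thesis by (cases b1; cases b2) (auto simp: WR_def)
qed

lemma B_real: assumes "p \<le> 1" shows
  "(if b1 then 0 else WR j1 j2 p n ((x1,True),(x2,b2)) * (-(2*j1+real x1)))
   + (if idx_parity p (x1,b1) = 1 then -1 else 1) * (if b2 then WR j1 j2 p n ((x1,b1),(Suc x2,False)) * (- real (Suc x2)) else 0) = 0"
proof (cases "\<not> b1 \<and> b2 \<and> Suc (x1 + x2) = n")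
  case True
  then have b: "b1 = False" "b2 = True" and T: "Suc (x1+x2) = n" by auto
  have w1: "WR j1 j2 p n ((x1,True),(x2,True)) = -((-1)^p) * real n * (real ((n-1) choose x1) * (-1)^x1
        * rGamma (2*j1 + 1 + real x1) * rGamma (2*j2 + 1 + real x2))"
    by (simp add: WR_def dR_def T[symmetric])
  have w2: "WR j1 j2 p n ((x1,False),(Suc x2,False)) = real (n choose x1) * (-1)^x1
        * rGamma (2*j1 + real x1) * rGamma (2*j2 + 1 + real x2)"
    by (simp add: WR_def cR_def T[symmetric] ac_simps)
  have ga: "rGamma (2*j1 + real x1) = (2*j1 + real x1) * rGamma (2*j1 + 1 + real x1)"
    using rG_step[of "2*j1 + real x1"] by (simp add: ac_simps)
  have bin: "real (Suc x2) * real (n choose x1) = real n * real ((n-1) choose x1)"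
  proof -
    have "(n - x1) * (n choose x1) = n * ((n - 1) choose x1)" by (rule binomial_absorb_comp)
    moreover have "n - x1 = Suc x2" using T by auto
    ultimately show ?thesis by (metis of_nat_mult)
  qed
  have sg: "(if idx_parity p (x1,False) = 1 then -1 else 1) = ((-1::real)^p)"
    using assms by (cases p) (auto simp: idx_parity_def)
  show ?thesis unfolding b if_True if_False w1 w2 sg
    by (rule ringB[OF ga bin])
next
  case False
  then show ?thesis by (cases b1; cases b2) (auto simp: WR_def)
qed

lemma Lz_real:
  "WR j1 j2 p n ((x1,b1),(x2,b2)) * (j1 + real x1 + (if b1 then 1/2 else 0))
   + WR j1 j2 p n ((x1,b1),(x2,b2)) * (j2 + real x2 + (if b2 then 1/2 else 0))
   = (j1 + j2 + real n) * WR j1 j2 p n ((x1,b1),(x2,b2))"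
proof (cases "(\<not> b1 \<and> \<not> b2 \<and> x1 + x2 = n) \<or> (b1 \<and> b2 \<and> Suc (x1 + x2) = n)")
  case True
  then show ?thesis
  proof
    assume a: "\<not> b1 \<and> \<not> b2 \<and> x1 + x2 = n"
    then have n: "n = x1 + x2" by simp
    show ?thesis using a unfolding n by (simp add: algebra_simps)
  next
    assume a: "b1 \<and> b2 \<and> Suc (x1 + x2) = n"
    then have n: "n = Suc (x1 + x2)" by simp
    show ?thesis using a unfolding n by (simp add: algebra_simps)
  qed
next
  case False
  then show ?thesis by (cases b1; cases b2) (auto simp: WR_def)
qed

lemma Bz_real:
  "WR j1 j2 p n ((x1,b1),(x2,b2)) * ((if c then - j1 else j1) + (if b1 then (if c then 1/2 else - 1/2) else 0))
   + WR j1 j2 p n ((x1,b1),(x2,b2)) * ((if \<not> c then - j2 else j2) + (if b2 then (if \<not> c then 1/2 else - 1/2) else 0))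
   = (if c then - (j1 - j2) else j1 - j2) * WR j1 j2 p n ((x1,b1),(x2,b2))"
proof (cases "b1 = b2")
  case True
  then show ?thesis by (cases c; cases b1) (auto simp: algebra_simps)
next
  case False
  then show ?thesis by (cases b1; cases b2) (auto simp: WR_def)
qed



theorem mainTheorem2:
  fixes j1 j2 :: real and p q n :: nat and up :: bool
    and \<Psi> :: "idx \<Rightarrow> complex" and X Y :: gen
    and lhs rhs :: "idx \<times> idx \<Rightarrow> complex"
  assumes hp: "p \<le> 1" and hq: "q \<le> 1"
  defines "\<Psi> \<equiv> bvec (0::nat, False)"
      and "X \<equiv> (if up then Vp else Wp)"
      and "Y \<equiv> (if up then Wp else Vp)"
      and "lhs \<equiv> (\<lambda>t. complex_of_real (fact n) *
             (\<Sum>k1 = 0..2*n.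
                complex_of_real ((-1) ^ ((k1 + 1 - p) div 2)
                  * rGamma (1 + real (k1 div 2)) * rGamma (1 + real ((2*n - k1) div 2))
                  * rGamma (2 * j1 + real ((k1 + 1) div 2))
                  * rGamma (2 * j2 + real ((2*n - k1 + 1) div 2)))
                * tens ((U_op up j1 ^^ k1) \<Psi>) ((U_op (\<not> up) j2 ^^ (2*n - k1)) \<Psi>) t))"
      and "rhs \<equiv> (\<lambda>t.
             (\<Sum>n1 = 0..n.
                complex_of_real (real (n choose n1) * (-1) ^ n1
                  * rGamma (2 * j1 + real n1) * rGamma (2 * j2 + real (n - n1)))
                * tens ((chiral_op up j1 Lp ^^ n1) \<Psi>)
                       ((chiral_op (\<not> up) j2 Lp ^^ (n - n1)) \<Psi>) t)
           - (-1) ^ p * of_nat n *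
             (if n = 0 then 0 else
              (\<Sum>m1 = 0..n-1.
                complex_of_real (real ((n-1) choose m1) * (-1) ^ m1
                  * rGamma (2 * j1 + 1 + real m1) * rGamma (2 * j2 + 1 + real (n - 1 - m1)))
                * tens ((chiral_op up j1 Lp ^^ m1) (chiral_op up j1 X \<Psi>))
                       ((chiral_op (\<not> up) j2 Lp ^^ (n - 1 - m1)) (chiral_op (\<not> up) j2 Y \<Psi>)) t)))"
  shows "lhs = rhs
    \<and> tensor_op up j1 p (\<not> up) j2 q Lm lhs = (\<lambda>_. 0)
    \<and> tensor_op up j1 p (\<not> up) j2 q Vm lhs = (\<lambda>_. 0)
    \<and> tensor_op up j1 p (\<not> up) j2 q Wm lhs = (\<lambda>_. 0)
    \<and> tensor_op up j1 p (\<not> up) j2 q Lz lhs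
        = (\<lambda>t. complex_of_real (j1 + j2 + real n) * lhs t)
    \<and> tensor_op up j1 p (\<not> up) j2 q Bz lhs
        = (\<lambda>t. complex_of_real (if up then - (j1 - j2) else j1 - j2) * lhs t)"
proof -
  note Psi = assms(3) and Xd = assms(4) and Yd = assms(5) and lhsd = assms(6) and rhsd = assms(7)
  define W where "W = (\<lambda>t. complex_of_real (WR j1 j2 p n t))"
  have lhsW: "lhs = W"
  proof
    fix t :: "idx \<times> idx"
    obtain x1 b1 x2 b2 where t: "t = ((x1,b1),(x2,b2))" by (metis prod.exhaust)
    define K where "K = 2*x1 + (if b1 then 1 else 0)"
    have inj: "\<And>k. k div 2 = x1 \<Longrightarrow> odd k = b1 \<Longrightarrow> k = K"
      unfolding K_def by (cases b1) (simp_all, presburger+)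
    have "lhs t = complex_of_real (fact n) *
             (\<Sum>k1 = 0..2*n.
                complex_of_real ((-1) ^ ((k1 + 1 - p) div 2)
                  * rGamma (1 + real (k1 div 2)) * rGamma (1 + real ((2*n - k1) div 2))
                  * rGamma (2 * j1 + real ((k1 + 1) div 2))
                  * rGamma (2 * j2 + real ((2*n - k1 + 1) div 2)))
                * bvec ((k1 div 2, odd k1), ((2*n-k1) div 2, odd (2*n-k1))) t)"
      unfolding lhsd Psi U_pow tens_bvec ..
    also have "\<dots> = complex_of_real (fact n) * (if K \<in> {0..2*n} \<and> ((K div 2, odd K), ((2*n-K) div 2, odd (2*n-K))) = t then
               complex_of_real ((-1) ^ ((K + 1 - p) div 2)
                  * rGamma (1 + real (K div 2)) * rGamma (1 + real ((2*n - K) div 2))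
                  * rGamma (2 * j1 + real ((K + 1) div 2))
                  * rGamma (2 * j2 + real ((2*n - K + 1) div 2))) else 0)"
      by (subst sum_bvec_collapse[where K=K]) (use inj in \<open>auto simp: t\<close>)
    also have "\<dots> = W t"
    proof -
      consider (FF) "\<not>b1" "\<not>b2" "x1+x2=n" | (TT) "b1" "b2" "x1+x2+1=n"
        | (Z) "\<not>((\<not>b1 \<and> \<not>b2 \<and> x1+x2=n) \<or> (b1 \<and> b2 \<and> x1+x2+1=n))" by blast
      then show ?thesis
      proof cases
        case FF
        have e: "K = 2*x1" "2*n-2*x1 = 2*x2" "(2*x1+1) div 2 = x1" "(2*x2+1) div 2 = x2"
          using FF by (auto simp: K_def)
        show ?thesis using coefF[OF hp, of x1 x2 j1 j2] FF
          by (simp add: W_def WR_def t e del: of_real_fact flip: of_real_mult)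
      next
        case TT
        have e: "K = 2*x1+1" "(2*n-Suc (2*x1)) div 2 = x2" "(2 * Suc (x1+x2) - Suc (2 * x1)) div 2 = x2" "(2*x1+1) div 2 = x1" "(2*x2+1) div 2 = x2"
           "(2*x1+1+1) div 2 = Suc x1" "(2*x2+1+1) div 2 = Suc x2" "2*x1+1+1-p = 2*x1+2-p"
          using TT by (auto simp: K_def)
        show ?thesis using coefT[OF hp, of x1 x2 j1 j2] TT
          by (simp add: W_def WR_def t e TT(3)[symmetric] del: of_real_fact flip: of_real_mult)
      next
        case Z
        have nc: "\<not> (K \<in> {0..2*n} \<and> ((K div 2, odd K), ((2*n-K) div 2, odd (2*n-K))) = t)"
        proof
          assume a: "K \<in> {0..2*n} \<and> ((K div 2, odd K), ((2*n-K) div 2, odd (2*n-K))) = t"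
          then have "K \<le> 2*n" "(2*n-K) div 2 = x2" "odd (2*n-K) = b2" by (auto simp: t)
          note A = this
          show False
          proof (cases b1)
            case True
            then have K: "K = 2*x1+1" by (simp add: K_def)
            have "odd (2*n-K)" using A(1) K by presburger
            then have b2 using A(3) by simp
            have "x1+x2+1 = n" using A(1,2) K by presburger
            then show False using Z True \<open>b2\<close> by simp
          next
            case False
            then have K: "K = 2*x1" by (simp add: K_def)
            have "even (2*n-K)" using A(1) K by presburger
            then have "\<not> b2" using A(3) by simp
            have "x1+x2 = n" using A(1,2) K by presburger
            then show False using Z False \<open>\<not> b2\<close> by simp
          qed
        qed
        show ?thesis unfolding if_not_P[OF nc] using Z by (auto simp: W_def WR_def t)
      qed
    qed
    finally show "lhs t = W t" .
  qed
  have XP: "chiral_op up j1 X \<Psi> = bvec (0,True)" "chiral_op (\<not> up) j2 Y \<Psi> = bvec (0,True)"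
    unfolding Xd Yd Psi chiral_op_bvec by (cases up; auto)+
  have rhsW: "rhs = W"
  proof
    fix t :: "idx \<times> idx"
    obtain x1 b1 x2 b2 where t: "t = ((x1,b1),(x2,b2))" by (metis prod.exhaust)
    have "rhs t = (\<Sum>n1 = 0..n.
                complex_of_real (real (n choose n1) * (-1) ^ n1
                  * rGamma (2 * j1 + real n1) * rGamma (2 * j2 + real (n - n1)))
                * bvec ((n1,False),(n-n1,False)) t)
           - (-1) ^ p * of_nat n *
             (if n = 0 then 0 else
              (\<Sum>m1 = 0..n-1.
                complex_of_real (real ((n-1) choose m1) * (-1) ^ m1
                  * rGamma (2 * j1 + 1 + real m1) * rGamma (2 * j2 + 1 + real (n - 1 - m1)))
                * bvec ((m1,True),(n-1-m1,True)) t))"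
      unfolding rhsd XP unfolding Psi Lp_pow tens_bvec ..
    also have "\<dots> = (if x1 \<in> {0..n} \<and> ((x1,False),(n-x1,False)) = t then
                complex_of_real (real (n choose x1) * (-1) ^ x1
                  * rGamma (2 * j1 + real x1) * rGamma (2 * j2 + real (n - x1))) else 0)
           - (-1) ^ p * of_nat n *
             (if n = 0 then 0 else
              (if x1 \<in> {0..n-1} \<and> ((x1,True),(n-1-x1,True)) = t then
                complex_of_real (real ((n-1) choose x1) * (-1) ^ x1
                  * rGamma (2 * j1 + 1 + real x1) * rGamma (2 * j2 + 1 + real (n - 1 - x1))) else 0))"
      by (subst sum_bvec_collapse[where K=x1], simp, simp add: t,
          subst sum_bvec_collapse[where K=x1], simp, simp add: t, rule refl)
    also have "\<dots> = W t"
    proof -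
      consider (FF) "\<not>b1" "\<not>b2" "x1+x2=n" | (TT) "b1" "b2" "x1+x2+1=n"
        | (Z) "\<not>((\<not>b1 \<and> \<not>b2 \<and> x1+x2=n) \<or> (b1 \<and> b2 \<and> x1+x2+1=n))" by blast
      then show ?thesis
      proof cases
        case FF
        then show ?thesis by (auto simp: W_def WR_def t cR_def)
      next
        case TT
        then show ?thesis by (auto simp: W_def WR_def t dR_def add.assoc)
      next
        case Z
        then show ?thesis by (auto simp: W_def WR_def t)
      qed
    qed
    finally show "rhs t = W t" .
  qed
  have WF: "finite {b. W b \<noteq> 0}" unfolding W_def by (rule WR_fin)
  have WF1: "\<And>t2. finite {b. W (b,t2) \<noteq> 0}" unfolding W_def by (rule WR_fin1)
  have WF2: "\<And>t1. finite {b. W (t1,b) \<noteq> 0}" unfolding W_def by (rule WR_fin2)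
  have Lm: "tensor_op up j1 p (\<not> up) j2 q Lm W = (\<lambda>_. 0)"
  proof
    fix t :: "idx \<times> idx"
    obtain x1 b1 x2 b2 where t: "t = ((x1,b1),(x2,b2))" by (metis prod.exhaust)
    show "tensor_op up j1 p (\<not> up) j2 q Lm W t = 0"
      unfolding t tensor_op_split[OF WF] op_Lm[OF WF1] op_Lm[OF WF2]
      using arg_cong[OF Lm_real[of j1 j2 p n x1 b1 x2 b2], of complex_of_real]
      by (simp add: W_def)
  qed
  have Lz: "tensor_op up j1 p (\<not> up) j2 q Lz W = (\<lambda>t. complex_of_real (j1 + j2 + real n) * W t)"
  proof
    fix t :: "idx \<times> idx"
    obtain x1 b1 x2 b2 where t: "t = ((x1,b1),(x2,b2))" by (metis prod.exhaust)
    show "tensor_op up j1 p (\<not> up) j2 q Lz W t = complex_of_real (j1 + j2 + real n) * W t"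
      unfolding t tensor_op_split[OF WF] op_Lz[OF WF1] op_Lz[OF WF2]
      using arg_cong[OF Lz_real[of j1 j2 p n x1 b1 x2 b2], of complex_of_real]
      by (simp add: W_def)
  qed
  have Bz: "tensor_op up j1 p (\<not> up) j2 q Bz W
        = (\<lambda>t. complex_of_real (if up then - (j1 - j2) else j1 - j2) * W t)"
  proof
    fix t :: "idx \<times> idx"
    obtain x1 b1 x2 b2 where t: "t = ((x1,b1),(x2,b2))" by (metis prod.exhaust)
    show "tensor_op up j1 p (\<not> up) j2 q Bz W t = complex_of_real (if up then - (j1 - j2) else j1 - j2) * W t"
      unfolding t tensor_op_split[OF WF] op_Bz[OF WF1] op_Bz[OF WF2]
      using arg_cong[OF Bz_real[of j1 j2 p n x1 b1 x2 b2 up], of complex_of_real]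
      by (cases up; cases b1; cases b2) (simp_all add: W_def)
  qed
  have Vm: "tensor_op up j1 p (\<not> up) j2 q Vm W = (\<lambda>_. 0)"
  proof
    fix t :: "idx \<times> idx"
    obtain x1 b1 x2 b2 where t: "t = ((x1,b1),(x2,b2))" by (metis prod.exhaust)
    show "tensor_op up j1 p (\<not> up) j2 q Vm W t = 0"
    proof (cases up)
      case True
      then have u: "up = True" by simp
      show ?thesis
        unfolding t u not_True_eq_False tensor_op_split[OF WF] op_Vm_T[OF WF1] op_Vm_F[OF WF2]
        using arg_cong[OF A_real[OF hp, of b1 j1 j2 n x1 x2 b2], of complex_of_real]
        by (cases b1; cases b2) (simp_all add: W_def split: if_split_asm)
    next
      case False
      then have u: "up = False" by simp
      show ?thesis
        unfolding t u not_False_eq_True tensor_op_split[OF WF] op_Vm_F[OF WF1] op_Vm_T[OF WF2]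
        using arg_cong[OF B_real[OF hp, of b1 j1 j2 n x1 x2 b2], of complex_of_real]
        by (cases b1; cases b2) (simp_all add: W_def split: if_split_asm)
    qed
  qed
  have Wm: "tensor_op up j1 p (\<not> up) j2 q Wm W = (\<lambda>_. 0)"
  proof
    fix t :: "idx \<times> idx"
    obtain x1 b1 x2 b2 where t: "t = ((x1,b1),(x2,b2))" by (metis prod.exhaust)
    show "tensor_op up j1 p (\<not> up) j2 q Wm W t = 0"
    proof (cases up)
      case True
      then have u: "up = True" by simp
      show ?thesis
        unfolding t u not_True_eq_False tensor_op_split[OF WF] op_Wm_T[OF WF1] op_Wm_F[OF WF2]
        using arg_cong[OF B_real[OF hp, of b1 j1 j2 n x1 x2 b2], of complex_of_real]
        by (cases b1; cases b2) (simp_all add: W_def split: if_split_asm)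
    next
      case False
      then have u: "up = False" by simp
      show ?thesis
        unfolding t u not_False_eq_True tensor_op_split[OF WF] op_Wm_F[OF WF1] op_Wm_T[OF WF2]
        using arg_cong[OF A_real[OF hp, of b1 j1 j2 n x1 x2 b2], of complex_of_real]
        by (cases b1; cases b2) (simp_all add: W_def split: if_split_asm)
    qed
  qed
  show ?thesis unfolding lhsW rhsW using Lm Lz Bz Vm Wm by simp
qed


end
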